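(* For distinct sets $X,Y\in\mathcal{X}_2$, the inclusion $X\subset Y$ holds if and only if $X\subseteq1+4\mathbb{N}_0$ and $i(Y)<i(X)$.
   Context: $\mathbb{N}=\{1,2,\dots\}$, $\mathbb{N}_0=\{0\}\cup\mathbb{N}$, $x^{\mathbb{N}}=\{x^k:k\in\mathbb{N}\}$. $\mathcal{X}_2=\{\overline{a^{\mathbb{N}}}:a\in\mathbb{N}\setminus2\mathbb{N},\ a\ne1\}$, closures taken in the $2$-adic topology on $\mathbb{N}\setminus2\mathbb{N}$ (generated by the sets $x+2^m\mathbb{N}_0$). $\mathbb{Z}_{2^m}^\times$ is the unit group of $\mathbb{Z}/2^m\mathbb{Z}$, $\pi_m:\mathbb{N}\to\mathbb{Z}/2^m\mathbb{Z}$, $x\mapsto x+2^m\mathbb{Z}$. For $X\in\mathcal{X}_2$, $n(X)=\min\{m\in\mathbb{N}:X=\pi_m^{-1}(\pi_m(X)),\ |\pi_m(X)|\ge3\}$ and $i(X)$ is the index of the subgroup $\pi_{n(X)}(X)$ in $\mathbb{Z}_{2^{n(X)}}^\times$. *)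

theory Defs
  imports Main
begin

text \<open>Natural numbers N = {1,2,...} are represented as positive nat; odd positive
 naturals form the ambient space N \ 2N. The residue ring Z/2^m Z is represented by
 the canonical representatives {0..<2^m}, and pi_m x = x mod 2^m.\<close>

definition odd_nats :: "nat set" where
  "odd_nats = {x. x > 0 \<and> odd x}"

definition pows :: "nat \<Rightarrow> nat set" where
  "pows a = {a ^ k | k. k \<ge> 1}"

text \<open>Closure in the 2-adic topology on the odd naturals, generated by the sets
 x + 2^m N_0 (m in N).  A point y lies in the closure of S iff every generating
 set containing y meets S; the sets y + 2^m N_0 form a neighbourhood base at y.\<close>
definition adic_closure :: "nat set \<Rightarrow> nat set" where
  "adic_closure S = {y \<in> odd_nats. \<forall>m::nat. m \<ge> 1 \<longrightarrow>
       (\<exists>s\<in>S. \<exists>k::nat. s = y + 2 ^ m * k)}"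

definition calX2 :: "nat set set" where
  "calX2 = {adic_closure (pows a) | a. a \<in> odd_nats \<and> a \<noteq> 1}"

definition pi_m :: "nat \<Rightarrow> nat \<Rightarrow> nat" where
  "pi_m m x = x mod 2 ^ m"

definition units2 :: "nat \<Rightarrow> nat set" where
  "units2 m = {u. u < 2 ^ m \<and> coprime u (2 ^ m)}"

definition nX :: "nat set \<Rightarrow> nat" where
  "nX X = (LEAST m. m \<ge> 1 \<and> X = {x. x > 0 \<and> pi_m m x \<in> pi_m m ` X}
                     \<and> card (pi_m m ` X) \<ge> 3)"

definition iX :: "nat set \<Rightarrow> nat" where
  "iX X = (let m = nX X; H = pi_m m ` X in
      card {(\<lambda>h. (u * h) mod 2 ^ m) ` H | u. u \<in> units2 m})"

end

theory Submission
  imports Defs "HOL-Number_Theory.Cong"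
begin


lemma two_adic_decomp:
  fixes n :: nat assumes "n > 0" shows "\<exists>t v. n = 2^t * v \<and> odd v"
  using assms
proof (induction n rule: less_induct)
  case (less n)
  show ?case
  proof (cases "even n")
    case True
    then obtain m where m: "n = 2 * m" by blast
    with less.prems have "m < n" "m > 0" by auto
    from less.IH[OF this] obtain t v where "m = 2^t * v" "odd v" by blast
    with m show ?thesis by (intro exI[of _ "Suc t"] exI[of _ v]) auto
  next
    case False
    then show ?thesis by (intro exI[of _ 0] exI[of _ n]) auto
  qed
qed

lemma mod_one_plus: "(1::nat) < M \<Longrightarrow> (1 + M * k) mod M = 1"
  by (metis mod_less mod_mult_self2 mult.commute)

lemma sq_lemma:
  fixes x :: nat assumes "s \<ge> 1" "x mod 2^s = 1"
  shows "x^2 mod 2^(s+1) = 1"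
proof -
  have "x = 1 + 2^s * (x div 2^s)" using assms(2) by (metis add.commute div_mult_mod_eq mult.commute)
  then obtain q where x: "x = 1 + 2^s * q" by blast
  obtain s' where s': "s = Suc s'" using assms(1) by (cases s) auto
  have "x^2 = 1 + 2^(s+1) * (q + 2^s' * q^2)"
    unfolding x s' by (simp add: power2_eq_square algebra_simps)
  moreover have "(1::nat) < 2^(s+1)" by (metis one_less_numeral_iff one_less_power semiring_norm(76) zero_less_Suc add.commute plus_1_eq_Suc)
  ultimately show ?thesis using mod_one_plus by simp
qed

lemma pow_odd_step:
  fixes r w :: nat assumes "r \<ge> 2" "odd w"
  shows "(1 + 2^r * w)^2 = 1 + 2^(r+1) * (w + 2^(r-1) * w^2) \<and> odd (w + 2^(r-1) * w^2)"
proof -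
  obtain r' where r': "r = Suc (Suc r')" using assms(1) by (metis add_2_eq_Suc le_Suc_ex)
  show ?thesis using assms(2) unfolding r' by (simp add: power2_eq_square algebra_simps)
qed

lemma pow_2pow:
  fixes b :: nat assumes "s \<ge> 2" "b = 1 + 2^s * v" "odd v"
  shows "\<exists>w. odd w \<and> b^(2^j) = 1 + 2^(s+j) * w"
proof (induction j)
  case 0 then show ?case using assms by auto
next
  case (Suc j)
  then obtain w where w: "odd w" "b^(2^j) = 1 + 2^(s+j) * w" by blast
  have "b^(2^Suc j) = (b^(2^j))^2" by (simp add: power_mult[symmetric] mult.commute)
  also have "\<dots> = 1 + 2^(s+j+1) * (w + 2^(s+j-1) * w^2)"
    using pow_odd_step[of "s+j" w] w assms by simp
  finally show ?case using pow_odd_step[of "s+j" w] w assms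
    by (intro exI[of _ "w + 2^(s+j-1) * w^2"]) simp
qed



lemma mod_split2: "(a::nat) mod 2^(m+1) = 2^m * (a div 2^m mod 2) + a mod 2^m"
  by (metis mod_mult2_eq power_add power_one_right)

lemma lift_lemma:
  fixes b c v x :: nat
  assumes "odd c" "s \<ge> 2" "b = 1 + 2^s*v" "odd v" "x mod 2^s = c mod 2^s"
  shows "\<exists>k. (c * b^k) mod 2^(s+d) = x mod 2^(s+d)"
proof (induction d)
  case 0 then show ?case using assms by (intro exI[of _ 0]) simp
next
  case (Suc d)
  define m where "m = s + d"
  from Suc obtain k where k: "(c * b^k) mod 2^m = x mod 2^m" unfolding m_def by blast
  define z where "z = c * b^k"
  have oddb: "odd b" using assms by simp
  have oddz: "odd z" unfolding z_def using assms(1) oddb by simp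
  obtain w where w: "odd w" "b^(2^d) = 1 + 2^m * w" using pow_2pow[OF assms(2,3,4), of d] unfolding m_def by blast
  have goal: "s + Suc d = m + 1" unfolding m_def by simp
  show ?case
  proof (cases "z div 2^m mod 2 = x div 2^m mod 2")
    case True
    show ?thesis unfolding goal
      by (intro exI[of _ k]) (metis True k mod_split2 z_def)
  next
    case False
    define z' where "z' = c * b^(k + 2^d)"
    have z': "z' = z + 2^m * (z * w)" unfolding z'_def z_def power_add w by (simp add: algebra_simps)
    have A: "z' mod 2^m = z mod 2^m" unfolding z' by simp
    have "z' div 2^m = z div 2^m + z * w" unfolding z' by simp
    moreover have "odd (z * w)" using oddz w(1) by simp
    ultimately have "z' div 2^m mod 2 = x div 2^m mod 2" using False
      by (auto simp: mod2_eq_if split: if_splits)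
    then have "z' mod 2^(m+1) = x mod 2^(m+1)"
      by (metis A k mod_split2 z_def)
    then show ?thesis unfolding goal z'_def by blast
  qed
qed



definition gen :: "nat \<Rightarrow> nat set \<Rightarrow> nat set" where
  "gen M R = {x. 0 < x \<and> x mod 2^M \<in> R}"

lemma hit:
  fixes s y :: nat
  assumes "y < 2^M" "m \<le> M" "s mod 2^M = y mod 2^M"
  shows "\<exists>k. s = y + 2^m * k"
proof -
  have "s mod 2^M = y" using assms by simp
  hence "s = y + 2^M * (s div 2^M)" by (metis add.commute div_mult_mod_eq mult.commute)
  also have "2^M = 2^m * (2^(M-m)::nat)" using assms(2) by (simp add: power_add[symmetric])
  finally show ?thesis by (metis mult.assoc)
qed

lemma closure_mem:
  assumes "y > 0" "odd y" "\<And>M. M \<ge> M0 \<Longrightarrow> \<exists>k\<ge>1. (a^k) mod 2^M = y mod 2^M"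
  shows "y \<in> adic_closure (pows a)"
  unfolding adic_closure_def
proof (intro CollectI conjI allI impI)
  show "y \<in> odd_nats" using assms unfolding odd_nats_def by simp
  fix m :: nat assume "m \<ge> 1"
  define M where "M = M0 + m + y"
  obtain k where k: "k \<ge> 1" "(a^k) mod 2^M = y mod 2^M" using assms(3)[of M] unfolding M_def by auto
  have "y < 2^y" by (rule less_exp)
  also have "(2::nat)^y \<le> 2^M" unfolding M_def by (rule power_increasing) auto
  finally have "y < 2^M" .
  from hit[OF this _ k(2), of m] obtain j where "a^k = y + 2^m * j" unfolding M_def by auto
  moreover have "a^k \<in> pows a" unfolding pows_def using k(1) by blast
  ultimately show "\<exists>s\<in>pows a. \<exists>k. s = y + 2 ^ m * k" by blast
qed

lemma closure_sub:
  assumes "y \<in> adic_closure (pows a)" "m \<ge> 1"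
  shows "y > 0 \<and> (\<exists>k\<ge>1. (a^k) mod 2^m = y mod 2^m)"
proof -
  have "y > 0" using assms unfolding adic_closure_def odd_nats_def by auto
  moreover obtain s j where "s \<in> pows a" "s = y + 2^m * j" using assms unfolding adic_closure_def by blast
  then obtain k where "k \<ge> 1" "a^k = y + 2^m * j" unfolding pows_def by auto
  then have "k \<ge> 1 \<and> (a^k) mod 2^m = y mod 2^m" by simp
  ultimately show ?thesis by blast
qed

lemma pow_mod_one: "(a::nat) mod M = 1 \<Longrightarrow> a^k mod M = 1"
  by (metis power_mod power_one mod_mod_trivial)

lemma one_less_2pow: "t \<ge> 1 \<Longrightarrow> (1::nat) < 2^t"
  by (metis One_nat_def less_exp le_less_trans not_less_eq_eq)

lemma mod_2pow_mod2: "t \<ge> 1 \<Longrightarrow> (y::nat) mod 2^t mod 2 = y mod 2"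
proof -
  assume "t \<ge> 1"
  then have "(2::nat) dvd 2^t" by (simp add: dvd_power)
  then show ?thesis by (rule mod_mod_cancel)
qed

lemma typeA:
  fixes a :: nat
  assumes "t \<ge> 2" "a = 1 + 2^t * v" "odd v"
  shows "adic_closure (pows a) = gen t {1}"
proof
  have t1: "(1::nat) < 2^t" using assms(1) one_less_2pow by simp
  have amod: "a mod 2^t = 1" using assms(2) t1 mod_one_plus by simp
  show "adic_closure (pows a) \<subseteq> gen t {1}"
  proof
    fix y assume y: "y \<in> adic_closure (pows a)"
    from closure_sub[OF y, of t] assms(1) obtain k where "y > 0" "a^k mod 2^t = y mod 2^t" by auto
    then show "y \<in> gen t {1}" unfolding gen_def using pow_mod_one[OF amod, of k] by simp
  qed
  show "gen t {1} \<subseteq> adic_closure (pows a)"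
  proof
    fix y assume "y \<in> gen t {1}"
    then have y: "y > 0" "y mod 2^t = 1" unfolding gen_def by auto
    have "odd y"
    proof -
      have "y mod 2 = y mod 2^t mod 2" using assms(1) mod_2pow_mod2[of t y] by simp
      then show ?thesis using y(2) by (simp add: odd_iff_mod_2_eq_one)
    qed
    show "y \<in> adic_closure (pows a)"
    proof (rule closure_mem[OF y(1) \<open>odd y\<close>, of t])
      fix M assume "M \<ge> t"
      then obtain d where M: "M = t + d" using le_Suc_ex by blast
      have "odd a" using assms by simp
      from lift_lemma[OF this assms(1,2,3), of y d] y(2) amod obtain k
        where "(a * a^k) mod 2^M = y mod 2^M" unfolding M by auto
      then show "\<exists>k\<ge>1. a ^ k mod 2 ^ M = y mod 2 ^ M" by (intro exI[of _ "Suc k"]) simp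
    qed
  qed
qed



lemma typeB:
  fixes a :: nat
  assumes t2: "t \<ge> 2" and av: "a + 1 = 2^t * v" and "odd v"
  shows "adic_closure (pows a) = gen (t+1) {1, 2^t - 1}"
proof -
  obtain t' where t': "t = Suc t'" "t' \<ge> 1" using t2 by (cases t) auto
  have evena1: "even (a + 1)" using av t' by simp
  then have odda: "odd a" by simp
  define q where "q = a div 2"
  have aq: "a = 2*q + 1" using odda unfolding q_def by presburger
  have q1: "q + 1 = 2^t' * v" using av aq t' by simp
  have oddq: "odd q"
  proof -
    have "even (q+1)" using q1 t' by simp
    then show ?thesis by simp
  qed
  have a2: "a^2 = 1 + 2^(t+1) * (v*q)"
  proof -
    have "a^2 = 1 + 4 * (q * (q+1))" unfolding aq by (simp add: power2_eq_square algebra_simps)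
    also have "\<dots> = 1 + 4 * (q * 2^t' * v)" using q1 by (simp add: mult.assoc)
    also have "\<dots> = 1 + 2^(t+1) * (v*q)" using t' by (simp add: algebra_simps)
    finally show ?thesis .
  qed
  have oddvq: "odd (v*q)" using assms(3) oddq by simp
  define M :: nat where "M = 2^(t+1)"
  define c :: nat where "c = 2^t - 1"
  have t1: "t + 1 \<ge> 1" by simp
  have M1: "1 < M" unfolding M_def using one_less_2pow[OF t1] .
  have a2mod: "a^2 mod M = 1" unfolding M_def a2 using mod_one_plus M1 M_def by simp
  have cM: "c < M" unfolding c_def M_def
  proof -
    have ge: "2^t \<ge> (1::nat)" by simp
    have "(2::nat)^(t+1) = 2*2^t" by simp
    then show "2 ^ t - 1 < (2::nat) ^ (t + 1)" using ge by linarith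
  qed
  have amod: "a mod M = c"
  proof -
    obtain w where w: "v = 2*w + 1" using assms(3) oddE by blast
    have ge: "2^t \<ge> (1::nat)" by simp
    have "a = 2^t * v - 1" using av by simp
    also have "\<dots> = M * w + (2^t - 1)" unfolding w M_def using ge by (simp add: algebra_simps)
    finally have "a = c + M * w" unfolding c_def by simp
    moreover have "c < M" unfolding c_def M_def
    proof -
      have "(2::nat)^(t+1) = 2*2^t" by simp
      then show "2 ^ t - 1 < (2::nat) ^ (t + 1)" using ge by linarith
    qed
    ultimately show ?thesis by simp
  qed
  have ccmod: "c * c mod M = 1"
    using a2mod amod by (metis mod_mult_eq power2_eq_square)
  have powmod: "a^k mod M \<in> {1, c}" for k
  proof (induction k)
    case 0 then show ?case using M1 by simp
  next
    case (Suc k)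
    have "a^Suc k mod M = (a mod M) * (a^k mod M) mod M" by (simp add: mod_mult_eq)
    then show ?case using Suc amod ccmod M1 cM
      by (auto simp: mult.commute)
  qed
  have oddc: "odd c" unfolding c_def using t' by simp
  show ?thesis
  proof
    show "adic_closure (pows a) \<subseteq> gen (t+1) {1, 2^t - 1}"
    proof
      fix y assume y: "y \<in> adic_closure (pows a)"
      from closure_sub[OF y t1] obtain k where "y > 0" "a^k mod M = y mod M" unfolding M_def by auto
      then show "y \<in> gen (t+1) {1, 2^t - 1}" unfolding gen_def using powmod[of k]
        unfolding M_def c_def by simp
    qed
    show "gen (t+1) {1, 2^t - 1} \<subseteq> adic_closure (pows a)"
    proof
      fix y assume "y \<in> gen (t+1) {1, 2^t - 1}"
      then have y: "y > 0" "y mod M \<in> {1, c}" unfolding gen_def M_def c_def by auto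
      have "odd y"
      proof -
        have "y mod 2 = y mod M mod 2" unfolding M_def using mod_2pow_mod2[OF t1, of y] by simp
        then show ?thesis using y(2) oddc by (auto simp: odd_iff_mod_2_eq_one)
      qed
      show "y \<in> adic_closure (pows a)"
      proof (rule closure_mem[OF y(1) \<open>odd y\<close>, of "t+1"])
        fix N assume "N \<ge> t + 1"
        then obtain d where N: "N = (t+1) + d" using le_Suc_ex by blast
        have t21: "t + 1 \<ge> 2" using t2 by simp
        have oa2: "odd (a^2)" using odda by simp
        show "\<exists>k\<ge>1. a ^ k mod 2 ^ N = y mod 2 ^ N"
        proof (cases "y mod M = 1")
          case True
          from lift_lemma[OF oa2 t21 a2 oddvq, of y d] True a2mod obtain k
            where "(a^2 * (a^2)^k) mod 2^N = y mod 2^N" unfolding N M_def by auto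
          moreover have "a^2 * (a^2)^k = a^(2*k+2)" by (metis power_add power_mult power_one_right mult.commute)
          ultimately show ?thesis by (intro exI[of _ "2*k+2"]) simp
        next
          case False
          then have "y mod M = c" using y(2) by simp
          from lift_lemma[OF odda t21 a2 oddvq, of y d] this amod obtain k
            where "(a * (a^2)^k) mod 2^N = y mod 2^N" unfolding N M_def by auto
          moreover have "a * (a^2)^k = a^(2*k+1)" by (metis power_add power_mult power_one_right mult.commute)
          ultimately show ?thesis by (intro exI[of _ "2*k+1"]) simp
        qed
      qed
    qed
  qed
qed



lemma coset_count:
  fixes N :: nat and H :: "nat set"
  assumes N1: "N > 1" and HG: "H \<subseteq> {u. u < N \<and> coprime u N}" and one: "1 \<in> H"
    and cl: "\<And>x y. x \<in> H \<Longrightarrow> y \<in> H \<Longrightarrow> x*y mod N \<in> H"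
    and inv: "\<And>x. x \<in> H \<Longrightarrow> \<exists>y\<in>H. x*y mod N = 1"
  shows "card {(\<lambda>h. (u*h) mod N) ` H | u. u \<in> {u. u < N \<and> coprime u N}} * card H
         = card {u. u < N \<and> coprime u N}"
proof -
  define G where "G = {u. u < N \<and> coprime u N}"
  define f where "f u = (\<lambda>h. (u*h) mod N) ` H" for u
  define C where "C = {f u | u. u \<in> G}"
  have finG: "finite G" unfolding G_def by simp
  have finH: "finite H" using HG finite_subset[of H "{..<N}"] by auto
  have CfG: "C = f ` G" unfolding C_def by auto
  have finC: "finite C" unfolding CfG using finG by simp
  have fsub: "f u \<subseteq> G" if "u \<in> G" for u
  proof
    fix z assume "z \<in> f u"
    then obtain h where h: "h \<in> H" "z = u*h mod N" unfolding f_def by auto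
    have "coprime u N" "coprime h N" using that h HG unfolding G_def by auto
    then have "coprime (u*h) N" by simp
    then show "z \<in> G" unfolding G_def h(2) using N1 by simp
  qed
  have UC: "\<Union>C = G"
  proof
    show "\<Union>C \<subseteq> G" unfolding CfG using fsub by blast
    show "G \<subseteq> \<Union>C"
    proof
      fix u assume u: "u \<in> G"
      have "u = u * 1 mod N" using u unfolding G_def by simp
      then have "u \<in> f u" unfolding f_def using one by blast
      then show "u \<in> \<Union>C" unfolding CfG using u by blast
    qed
  qed
  have cardf: "card (f u) = card H" if "u \<in> G" for u
    unfolding f_def
  proof (rule card_image, rule inj_onI)
    fix h1 h2 assume h: "h1 \<in> H" "h2 \<in> H" "u*h1 mod N = u*h2 mod N"
    have "coprime u N" using that unfolding G_def by simp
    then have "[h1 = h2] (mod N)" using h(3) cong_mult_lcancel_nat unfolding cong_def by blast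
    moreover have "h1 < N" "h2 < N" using h(1,2) HG by auto
    ultimately show "h1 = h2" unfolding cong_def by simp
  qed
  have sub: "f u1 \<subseteq> f u2" if zz: "z \<in> f u1" "z \<in> f u2" for u1 u2 z
  proof
    obtain h1 where h1: "h1 \<in> H" "z = u1*h1 mod N" using zz(1) unfolding f_def by blast
    obtain h2 where h2: "h2 \<in> H" "z = u2*h2 mod N" using zz(2) unfolding f_def by blast
    note h12 = h1(1) h2(1) h1(2) h2(2)
    obtain h1' where h1': "h1' \<in> H" "h1*h1' mod N = 1" using inv[OF h12(1)] by blast
    fix x assume "x \<in> f u1"
    then obtain h where h: "h \<in> H" "x = u1*h mod N" unfolding f_def by auto
    define g where "g = h2 * (h1' * h mod N) mod N"
    have gH: "g \<in> H" unfolding g_def using cl h12 h1' h by blast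
    have "u2 * g mod N = u2 * (h2 * (h1' * h)) mod N" unfolding g_def by (simp add: mod_mult_right_eq)
    also have "\<dots> = ((u2*h2) mod N) * (h1'*h) mod N" by (simp add: mod_mult_left_eq mult.assoc)
    also have "\<dots> = ((u1*h1) mod N) * (h1'*h) mod N" using h12 by simp
    also have "\<dots> = u1 * (h1*h1') * h mod N" by (simp add: mod_mult_left_eq mult.assoc)
    also have "\<dots> = u1 * ((h1*h1') mod N) * h mod N" by (metis mod_mult_right_eq mod_mult_left_eq)
    also have "\<dots> = x" using h1' h by simp
    finally show "x \<in> f u2" unfolding f_def using gH by (metis image_eqI)
  qed
  have disj: "\<forall>c1\<in>C. \<forall>c2\<in>C. c1 \<noteq> c2 \<longrightarrow> c1 \<inter> c2 = {}"
    unfolding CfG using sub by blast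
  have "card H * card C = card (\<Union>C)"
  proof (rule card_partition[OF finC])
    show "finite (\<Union>C)" using UC finG by simp
    show "\<And>c. c \<in> C \<Longrightarrow> card c = card H" using cardf CfG by auto
    show "\<And>c1 c2. c1 \<in> C \<Longrightarrow> c2 \<in> C \<Longrightarrow> c1 \<noteq> c2 \<Longrightarrow> c1 \<inter> c2 = {}" using disj by blast
  qed
  then have "card C * card H = card G" unfolding UC by (simp add: mult.commute)
  then show ?thesis unfolding C_def f_def G_def by simp
qed



lemma mm: "M \<le> m \<Longrightarrow> (x::nat) mod 2^m mod 2^M = x mod 2^M"
  by (simp add: le_imp_power_dvd mod_mod_cancel)

lemma img_gen:
  assumes "M \<le> m" "0 \<notin> R"
  shows "(\<lambda>x. x mod 2^m) ` gen M R = {r. r < 2^m \<and> r mod 2^M \<in> R}"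
proof
  show "(\<lambda>x. x mod 2^m) ` gen M R \<subseteq> {r. r < 2^m \<and> r mod 2^M \<in> R}"
    unfolding gen_def using mm[OF assms(1)] by auto
  show "{r. r < 2^m \<and> r mod 2^M \<in> R} \<subseteq> (\<lambda>x. x mod 2^m) ` gen M R"
  proof
    fix r assume r: "r \<in> {r. r < 2^m \<and> r mod 2^M \<in> R}"
    then have "r > 0" using assms(2) by (cases r) auto
    then have "r \<in> gen M R" using r unfolding gen_def by auto
    moreover have "r = r mod 2^m" using r by simp
    ultimately show "r \<in> (\<lambda>x. x mod 2^m) ` gen M R" by blast
  qed
qed

lemma pre_gen:
  assumes "M \<le> m"
  shows "gen M R = {x. x > 0 \<and> x mod 2^m \<in> (\<lambda>x. x mod 2^m) ` gen M R}"
proof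
  show "gen M R \<subseteq> {x. x > 0 \<and> x mod 2^m \<in> (\<lambda>x. x mod 2^m) ` gen M R}"
    unfolding gen_def by auto
  show "{x. x > 0 \<and> x mod 2^m \<in> (\<lambda>x. x mod 2^m) ` gen M R} \<subseteq> gen M R"
  proof
    fix x assume "x \<in> {x. x > 0 \<and> x mod 2^m \<in> (\<lambda>x. x mod 2^m) ` gen M R}"
    then obtain y where "x > 0" "y \<in> gen M R" "x mod 2^m = y mod 2^m" by auto
    then have "x mod 2^M = y mod 2^M" using mm[OF assms] by metis
    then show "x \<in> gen M R" using \<open>x > 0\<close> \<open>y \<in> gen M R\<close> unfolding gen_def by auto
  qed
qed

lemma card_res:
  assumes "M \<le> m" "R \<subseteq> {..<2^M}"
  shows "card {r::nat. r < 2^m \<and> r mod 2^M \<in> R} = card R * 2^(m-M)"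
proof -
  define g where "g = (\<lambda>(a::nat, q::nat). a + 2^M * q)"
  have m: "(2::nat)^m = 2^M * 2^(m-M)" using assms(1) by (simp add: power_add[symmetric])
  have eq: "{r::nat. r < 2^m \<and> r mod 2^M \<in> R} = g ` (R \<times> {..<2^(m-M)})"
  proof
    show "{r::nat. r < 2^m \<and> r mod 2^M \<in> R} \<subseteq> g ` (R \<times> {..<2^(m-M)})"
    proof
      fix r assume r: "r \<in> {r::nat. r < 2^m \<and> r mod 2^M \<in> R}"
      have "r div 2^M < 2^(m-M)" using r m by (simp add: less_mult_imp_div_less mult.commute)
      moreover have "r = g (r mod 2^M, r div 2^M)" unfolding g_def by simp
      ultimately show "r \<in> g ` (R \<times> {..<2^(m-M)})" using r by blast
    qed
    show "g ` (R \<times> {..<2^(m-M)}) \<subseteq> {r::nat. r < 2^m \<and> r mod 2^M \<in> R}"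
    proof
      fix r assume "r \<in> g ` (R \<times> {..<2^(m-M)})"
      then obtain a q where aq: "a \<in> R" "q < 2^(m-M)" "r = a + 2^M * q" unfolding g_def by auto
      have a: "a < 2^M" using aq assms by auto
      have "a + 2^M * q < 2^M + 2^M * q" using a by simp
      also have "\<dots> = 2^M * (q+1)" by simp
      also have "\<dots> \<le> 2^M * 2^(m-M)" using aq(2) by (intro mult_le_mono2) simp
      finally have "r < 2^m" using aq m by simp
      moreover have "r mod 2^M = a" using aq a by simp
      ultimately show "r \<in> {r::nat. r < 2^m \<and> r mod 2^M \<in> R}" using aq by simp
    qed
  qed
  have inj: "inj_on g (R \<times> {..<2^(m-M)})"
  proof (rule inj_onI)
    fix x y assume xy: "x \<in> R \<times> {..<2^(m-M)}" "y \<in> R \<times> {..<2^(m-M)}" "g x = g y"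
    obtain a q where xa: "x = (a,q)" by (cases x)
    obtain b p where yb: "y = (b,p)" by (cases y)
    have x: "x = (a,q)" "y = (b,p)" "a < 2^M" "b < 2^M" "a + 2^M*q = b + 2^M*p"
      using xy xa yb assms unfolding g_def by auto
    have e1: "(a + 2^M*q) mod 2^M = a" "(b + 2^M*p) mod 2^M = b" using x(3,4) by simp_all
    have e2: "(a + 2^M*q) div 2^M = q" "(b + 2^M*p) div 2^M = p" using x(3,4) by simp_all
    have "a = b" "q = p" using e1 e2 x(5) by metis+
    then show "x = y" using x by simp
  qed
  have finR: "finite R" using assms(2) finite_subset by blast
  show ?thesis unfolding eq card_image[OF inj] card_cartesian_product using finR by simp
qed

lemma img_img: "m \<le> m' \<Longrightarrow> (\<lambda>x. x mod 2^m) ` S = (\<lambda>r. r mod 2^m) ` ((\<lambda>x::nat. x mod 2^m') ` S)"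
  by (simp add: image_image mm)



lemma pi_eq: "pi_m m = (\<lambda>x. x mod 2^m)"
  by (rule ext) (simp add: pi_m_def)

lemma card_pi:
  assumes "M \<le> m" "R \<subseteq> {r. odd r \<and> r < 2^M}"
  shows "card ((\<lambda>x. x mod 2^m) ` gen M R) = card R * 2^(m-M)"
proof -
  have "0 \<notin> R" using assms(2) by auto
  moreover have "R \<subseteq> {..<2^M}" using assms(2) by auto
  ultimately show ?thesis using img_gen[OF assms(1)] card_res[OF assms(1)] by simp
qed

lemma nX_gen:
  assumes R: "R \<subseteq> {r. odd r \<and> r < 2^M}" and n0: "M < n0" and c4: "card R * 2^(n0-M) = 4"
  shows "nX (gen M R) = n0"
  unfolding nX_def pi_eq
proof (rule Least_equality)
  have "n0 \<ge> 1" using n0 by simp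
  moreover have "gen M R = {x. 0 < x \<and> x mod 2 ^ n0 \<in> (\<lambda>x. x mod 2 ^ n0) ` gen M R}"
    using pre_gen[of M n0 R] n0 by simp
  moreover have "card ((\<lambda>x. x mod 2 ^ n0) ` gen M R) = 4" using card_pi[OF _ R, of n0] n0 c4 by simp
  ultimately show "1 \<le> n0 \<and> gen M R = {x. 0 < x \<and> x mod 2 ^ n0 \<in> (\<lambda>x. x mod 2 ^ n0) ` gen M R} \<and>
    3 \<le> card ((\<lambda>x. x mod 2 ^ n0) ` gen M R)" by simp
next
  fix m assume P: "1 \<le> m \<and> gen M R = {x. 0 < x \<and> x mod 2 ^ m \<in> (\<lambda>x. x mod 2 ^ m) ` gen M R} \<and>
    3 \<le> card ((\<lambda>x. x mod 2 ^ m) ` gen M R)"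
  show "n0 \<le> m"
  proof (rule ccontr)
    assume "\<not> n0 \<le> m"
    then have mm': "m \<le> n0 - 1" by simp
    have M': "M \<le> n0 - 1" using n0 by simp
    have e: "n0 - M = Suc (n0 - 1 - M)" using n0 by simp
    have c2: "card ((\<lambda>x. x mod 2 ^ (n0-1)) ` gen M R) = 2"
      using card_pi[OF M' R] c4 unfolding e by simp
    have "card ((\<lambda>x. x mod 2 ^ m) ` gen M R) \<le> card ((\<lambda>x. x mod 2 ^ (n0-1)) ` gen M R)"
    proof -
      have fin: "finite ((\<lambda>x. x mod 2 ^ (n0-1)) ` gen M R)"
        by (rule finite_subset[of _ "{..<2^(n0-1)}"]) auto
      show ?thesis unfolding img_img[OF mm', of "gen M R"] by (rule card_image_le[OF fin])
    qed
    then show False using P c2 by simp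
  qed
qed



lemma iX_gen:
  assumes R: "R \<subseteq> {r. odd r \<and> r < 2^M}" and n0: "M < n0" and c4: "card R * 2^(n0-M) = 4"
    and M1: "M \<ge> 1" and one: "1 \<in> R"
    and cl: "\<And>x y. x mod 2^M \<in> R \<Longrightarrow> y mod 2^M \<in> R \<Longrightarrow> (x*y) mod 2^M \<in> R"
    and p4: "\<And>x. x mod 2^M \<in> R \<Longrightarrow> x^4 mod 2^n0 = 1"
  shows "iX (gen M R) * 4 = 2^(n0-1)"
proof -
  define N :: nat where "N = 2^n0"
  define H where "H = {r. r < N \<and> r mod 2^M \<in> R}"
  have R0: "0 \<notin> R" using R by auto
  have Himg: "pi_m n0 ` gen M R = H" unfolding pi_eq H_def N_def using img_gen[OF _ R0, of M n0] n0 by simp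
  have R': "R \<subseteq> {..<2^M}" using R by auto
  have cH: "card H = 4" unfolding H_def N_def using card_res[OF _ R', of n0] n0 c4 by simp
  have n01: "1 \<le> n0" using n0 by simp
  have units: "units2 n0 = {u. u < N \<and> coprime u N}" unfolding units2_def N_def ..
  have units': "units2 n0 = {r. r < 2^n0 \<and> r mod 2^1 \<in> {1}}"
    unfolding units2_def proof (rule Collect_cong)
    fix u :: nat show "(u < 2^n0 \<and> coprime u (2^n0)) = (u < 2^n0 \<and> u mod 2^1 \<in> {1})"
      using n01 by (simp add: odd_iff_mod_2_eq_one)
  qed
  have cG: "card (units2 n0) = 2^(n0-1)" unfolding units' using card_res[of 1 n0 "{1}"] n01 by simp
  have N1: "N > 1" unfolding N_def using one_less_2pow[OF n01] .
  have Mn: "M \<le> n0" using n0 by simp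
  have HG: "H \<subseteq> {u. u < N \<and> coprime u N}"
  proof
    fix r assume "r \<in> H"
    then have r: "r < N" "r mod 2^M \<in> R" unfolding H_def by auto
    have "odd (r mod 2^M)" using r(2) R by auto
    then have "odd r" using mod_2pow_mod2[OF M1, of r] by (simp add: odd_iff_mod_2_eq_one)
    then show "r \<in> {u. u < N \<and> coprime u N}" using r(1) n01 unfolding N_def by simp
  qed
  have oneH: "1 \<in> H" unfolding H_def using one N1 one_less_2pow[OF M1] M1 by simp
  have clH: "x*y mod N \<in> H" if "x \<in> H" "y \<in> H" for x y
  proof -
    have "x mod 2^M \<in> R" "y mod 2^M \<in> R" "x*y mod N < N" using that N1 unfolding H_def by auto
    moreover have "(x*y mod N) mod 2^M = (x*y) mod 2^M" unfolding N_def by (rule mm[OF Mn])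
    ultimately show ?thesis using cl unfolding H_def by simp
  qed
  have invH: "\<exists>y\<in>H. x*y mod N = 1" if x: "x \<in> H" for x
  proof (intro bexI)
    have xx: "x*x mod N \<in> H" using clH[OF x x] .
    show "x*(x*x mod N) mod N \<in> H" using clH[OF x xx] .
    have "x*(x*(x*x mod N) mod N) mod N = x^4 mod N"
      by (simp add: mod_mult_right_eq power4_eq_xxxx mult.assoc)
    moreover have "x^4 mod N = 1" using x p4 unfolding H_def N_def by simp
    ultimately show "x*(x*(x*x mod N) mod N) mod N = 1" by simp
  qed
  have "iX (gen M R) = card {(\<lambda>h. (u*h) mod N) ` H | u. u \<in> units2 n0}"
    unfolding iX_def Let_def nX_gen[OF R n0 c4] Himg N_def ..
  moreover have "card {(\<lambda>h. (u*h) mod N) ` H | u. u \<in> units2 n0} * card H = card (units2 n0)"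
    unfolding units by (rule coset_count[OF N1 HG oneH clH invH])
  ultimately have "iX (gen M R) * card H = card (units2 n0)" by simp
  then show ?thesis using cH cG by simp
qed



lemma cc_mod:
  fixes t :: nat assumes "t \<ge> 1"
  shows "(2^t - 1) * (2^t - 1) mod 2^(t+1) = (1::nat)"
proof -
  obtain t' where t': "t = Suc t'" using assms by (cases t) auto
  obtain p' where p': "(2::nat)^t' = Suc p'" by (metis gr0_conv_Suc zero_less_power zero_less_numeral)
  have c: "(2::nat)^t - 1 = 2*p' + 1" using p' t' by simp
  have "(2^t - 1) * (2^t - 1) = 1 + 2^(t+1) * (p'::nat)"
    unfolding c using p' t' by (simp add: algebra_simps)
  then show ?thesis using mod_one_plus one_less_2pow[of "t+1"] by simp
qed

lemma A_facts:
  assumes "t \<ge> 2"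
  shows "nX (gen t {1}) = t + 2" "iX (gen t {1}) * 4 = 2^(t+1)"
proof -
  have t1: "t \<ge> 1" using assms by simp
  have R: "{1::nat} \<subseteq> {r. odd r \<and> r < 2^t}" using one_less_2pow[OF t1] by simp
  have n0: "t < t + 2" by simp
  have c4: "card {1::nat} * 2^(t+2-t) = 4" by simp
  show "nX (gen t {1}) = t + 2" by (rule nX_gen[OF R n0 c4])
  have cl: "(x*y) mod 2^t \<in> {1}" if "x mod 2^t \<in> {1}" "y mod 2^t \<in> {1}" for x y :: nat
    using that one_less_2pow[OF t1] t1 by (simp add: mod_mult_eq[symmetric])
  have p4: "x^4 mod 2^(t+2) = 1" if "x mod 2^t \<in> {1}" for x :: nat
  proof -
    have "(x^2) mod 2^(t+1) = 1" using sq_lemma[OF t1] that by simp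
    then have "(x^2)^2 mod 2^(t+1+1) = 1" using sq_lemma[of "t+1" "x^2"] by simp
    then show ?thesis by (simp add: power_mult[symmetric])
  qed
  have "iX (gen t {1}) * 4 = 2^(t+2-1)"
    by (rule iX_gen[OF R n0 c4 t1 _ cl p4]) simp_all
  then show "iX (gen t {1}) * 4 = 2^(t+1)" by simp
qed

lemma B_facts:
  assumes "t \<ge> 2"
  shows "nX (gen (t+1) {1, 2^t - 1}) = t + 2" "iX (gen (t+1) {1, 2^t - 1}) * 4 = 2^(t+1)"
proof -
  define c :: nat where "c = 2^t - 1"
  have t1: "t \<ge> 1" using assms by simp
  have t1': "t + 1 \<ge> 1" by simp
  have ge4: "(2::nat)^t \<ge> 4"
  proof -
    have "(2::nat)^2 \<le> 2^t" using assms by (rule power_increasing) simp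
    then show ?thesis by simp
  qed
  have cM: "c < 2^(t+1)" unfolding c_def
  proof -
    have "(2::nat)^(t+1) = 2*2^t" by simp
    then show "2 ^ t - 1 < (2::nat) ^ (t + 1)" using ge4 by linarith
  qed
  have oddc: "odd c" unfolding c_def using t1 by simp
  have c1: "c \<noteq> 1" unfolding c_def using ge4 by linarith
  have R: "{1::nat, c} \<subseteq> {r. odd r \<and> r < 2^(t+1)}" using one_less_2pow[OF t1'] cM oddc by simp
  have n0: "t + 1 < t + 2" by simp
  have c4: "card {1, c} * 2^(t+2-(t+1)) = 4" using c1 by simp
  show "nX (gen (t+1) {1, 2^t - 1}) = t + 2" using nX_gen[OF R n0 c4] unfolding c_def .
  have ccm: "c * c mod 2^(t+1) = 1" unfolding c_def by (rule cc_mod[OF t1])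
  have cmod: "c mod 2^(t+1) = c" using cM by simp
  have one: "(1::nat) mod 2^(t+1) = 1" using one_less_2pow[OF t1'] by simp
  have cl: "(x*y) mod 2^(t+1) \<in> {1, c}" if "x mod 2^(t+1) \<in> {1, c}" "y mod 2^(t+1) \<in> {1, c}" for x y :: nat
  proof -
    have "(x*y) mod 2^(t+1) = (x mod 2^(t+1)) * (y mod 2^(t+1)) mod 2^(t+1)" by (simp add: mod_mult_eq)
    then show ?thesis using that ccm cmod one by auto
  qed
  have p4: "x^4 mod 2^(t+2) = 1" if "x mod 2^(t+1) \<in> {1, c}" for x :: nat
  proof -
    have "(x^2) mod 2^(t+1) = (x mod 2^(t+1)) * (x mod 2^(t+1)) mod 2^(t+1)"
      by (simp add: mod_mult_eq power2_eq_square)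
    then have "(x^2) mod 2^(t+1) = 1" using that ccm one by auto
    then have "(x^2)^2 mod 2^(t+1+1) = 1" using sq_lemma[of "t+1" "x^2"] by simp
    then show ?thesis by (simp add: power_mult[symmetric])
  qed
  have "iX (gen (t+1) {1, c}) * 4 = 2^(t+2-1)"
    by (rule iX_gen[OF R n0 c4 t1' _ cl p4]) simp_all
  then show "iX (gen (t+1) {1, 2^t - 1}) * 4 = 2^(t+1)" unfolding c_def by simp
qed

lemma four_dvd_t2:
  fixes v :: nat assumes "4 dvd 2^t * v" "odd v" shows "t \<ge> 2"
proof (rule ccontr)
  assume "\<not> t \<ge> 2"
  then have "t = 0 \<or> t = 1" by auto
  then show False using assms by (auto dest: dvd_mult_right[of 2 2])
qed

lemma classify:
  assumes "X \<in> calX2"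
  shows "\<exists>t\<ge>2. X = gen t {1} \<or> X = gen (t+1) {1, 2^t - 1}"
proof -
  obtain a where a: "X = adic_closure (pows a)" "a > 0" "odd a" "a \<noteq> 1"
    using assms unfolding calX2_def odd_nats_def by auto
  have "a mod 4 = 1 \<or> a mod 4 = 3" using a(3) by presburger
  then show ?thesis
  proof
    assume a4: "a mod 4 = 1"
    have "a - 1 > 0" using a by simp
    then obtain t v where tv: "a - 1 = 2^t * v" "odd v" using two_adic_decomp by blast
    have "4 dvd a - 1" using a4 by presburger
    then have t2: "t \<ge> 2" using four_dvd_t2 tv by simp
    have "a = 1 + 2^t * v" using tv a(2) by simp
    then show ?thesis using typeA[OF t2 _ tv(2)] a(1) t2 by blast
  next
    assume a4: "a mod 4 = 3"
    obtain t v where tv: "a + 1 = 2^t * v" "odd v" using two_adic_decomp[of "a+1"] by auto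
    have "4 dvd a + 1" using a4 by presburger
    then have t2: "t \<ge> 2" using four_dvd_t2 tv by simp
    show ?thesis using typeB[OF t2 tv] a(1) t2 by blast
  qed
qed



lemma ge4: "t \<ge> 2 \<Longrightarrow> (2::nat)^t \<ge> 4"
proof -
  assume "t \<ge> 2"
  then have "(2::nat)^2 \<le> 2^t" by (rule power_increasing) simp
  then show ?thesis by simp
qed

lemma S1: "t \<ge> 2 \<Longrightarrow> gen t {1} \<subseteq> {1 + 4 * k | k::nat. True}"
proof
  fix x assume t: "t \<ge> 2" and "x \<in> gen t {1}"
  then have "x mod 2^t = 1" unfolding gen_def by simp
  then have "x mod 2^2 = 1" using mm[OF t, of x] by simp
  then have "x = 1 + 4 * (x div 4)" by (metis add.commute div_mult_mod_eq mult.commute numeral_Bit0_eq_double power2_eq_square numeral_times_numeral semiring_norm(12) semiring_norm(13) mult_2)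
  then show "x \<in> {1 + 4 * k | k::nat. True}" by blast
qed

lemma S2:
  assumes t: "t \<ge> 2"
  shows "(2::nat)^t - 1 \<in> gen (t+1) {1, 2^t - 1}" "(2::nat)^t - 1 \<notin> {1 + 4 * k | k::nat. True}"
proof -
  have g: "(2::nat)^t \<ge> 4" using ge4[OF t] .
  have "(2::nat)^(t+1) = 2*2^t" by simp
  then have "(2::nat)^t - 1 < 2^(t+1)" using g by linarith
  then show "(2::nat)^t - 1 \<in> gen (t+1) {1, 2^t - 1}" unfolding gen_def using g by simp
  obtain t' where t': "t = t' + 2" using t by (metis add.commute le_Suc_ex)
  obtain p where p: "(2::nat)^t' = Suc p" by (metis gr0_conv_Suc zero_less_power zero_less_numeral)
  have "(2::nat)^t - 1 = 3 + 4 * p" unfolding t' power_add p by simp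
  then show "(2::nat)^t - 1 \<notin> {1 + 4 * k | k::nat. True}"
  proof (intro notI)
    assume e: "(2::nat)^t - 1 = 3 + 4 * p" and "(2::nat)^t - 1 \<in> {1 + 4 * k | k::nat. True}"
    then obtain k where "(2::nat)^t - 1 = 1 + 4 * k" by blast
    with e show False by presburger
  qed
qed

lemma S3A: "2 \<le> s \<Longrightarrow> s \<le> t \<Longrightarrow> gen t {1} \<subseteq> gen s {1}"
proof
  fix x assume s: "2 \<le> s" "s \<le> t" and "x \<in> gen t {1}"
  then have "x > 0" "x mod 2^t = 1" unfolding gen_def by auto
  then have "x mod 2^s = 1 mod 2^s" using mm[OF s(2), of x] by simp
  also have "\<dots> = 1" using one_less_2pow[of s] s by simp
  finally show "x \<in> gen s {1}" using \<open>x > 0\<close> unfolding gen_def by simp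
qed

lemma S3B: "2 \<le> s \<Longrightarrow> s < t \<Longrightarrow> gen t {1} \<subseteq> gen (s+1) {1, 2^s - 1}"
  using S3A[of "s+1" t] unfolding gen_def by auto

lemma S5:
  assumes "2 \<le> t" "t \<le> s"
  shows "(1::nat) + 2^s \<in> gen t {1}" "(1::nat) + 2^s \<notin> gen (s+1) {1, 2^s - 1}"
proof -
  have "(1::nat) + 2^s = 1 + 2^t * 2^(s-t)" using assms by (simp add: power_add[symmetric])
  then have "((1::nat) + 2^s) mod 2^t = 1" using mod_one_plus one_less_2pow[of t] assms by simp
  then show "(1::nat) + 2^s \<in> gen t {1}" unfolding gen_def by simp
  have g: "(2::nat)^s \<ge> 4" using ge4 assms by simp
  have "(2::nat)^(s+1) = 2*2^s" by simp
  then have "(1::nat) + 2^s < 2^(s+1)" using g by linarith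
  then have "((1::nat) + 2^s) mod 2^(s+1) = 1 + 2^s" by simp
  moreover have "(1::nat) + 2^s \<noteq> 1" "(1::nat) + 2^s \<noteq> 2^s - 1" using g by linarith+
  ultimately show "(1::nat) + 2^s \<notin> gen (s+1) {1, 2^s - 1}" unfolding gen_def by simp
qed

lemma S6:
  assumes "2 \<le> t" "2 \<le> s" "s \<noteq> t"
  shows "(2::nat)^t - 1 \<notin> gen (s+1) {1, 2^s - 1}"
proof -
  have gt: "(2::nat)^t \<ge> 4" "(2::nat)^s \<ge> 4" using ge4 assms by auto
  have "((2::nat)^t - 1) mod 2^(s+1) \<notin> {1, 2^s - 1}"
  proof (cases "t < s")
    case True
    have "(2::nat)^t < 2^s" using True by simp
    moreover have "(2::nat)^s < 2^(s+1)" by simp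
    ultimately have "(2::nat)^t - 1 < 2^(s+1)" by linarith
    then have "((2::nat)^t - 1) mod 2^(s+1) = 2^t - 1" by (rule mod_less)
    moreover have "(2::nat)^t - 1 \<noteq> 1" "(2::nat)^t - 1 \<noteq> 2^s - 1" using gt \<open>(2::nat)^t < 2^s\<close> by linarith+
    ultimately show ?thesis by simp
  next
    case False
    then have st: "s + 1 \<le> t" using assms by simp
    define K :: nat where "K = 2^(s+1)"
    have K2: "K = 2 * 2^s" unfolding K_def by simp
    obtain q where q: "(2::nat)^(t - (s+1)) = Suc q" by (metis gr0_conv_Suc zero_less_power zero_less_numeral)
    have "(2::nat)^t = 2^(s+1) * 2^(t-(s+1))" using st by (metis le_add_diff_inverse power_add)
    then have "(2::nat)^t = K * Suc q" unfolding K_def q by simp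
    then have e: "(2::nat)^t - 1 = (K - 1) + K * q" using K2 gt by simp
    have "K - 1 < K" using K2 gt by simp
    then have "((K - 1) + K * q) mod K = K - 1" by (metis mod_less mod_mult_self2 mod_mult_self1 mult.commute)
    then have "((2::nat)^t - 1) mod K = K - 1" by (simp only: e)
    then show ?thesis unfolding K_def[symmetric] using K2 gt by auto
  qed
  then show ?thesis unfolding gen_def by simp
qed

theorem lemma4p8:
  assumes "X \<in> calX2" and "Y \<in> calX2" and "X \<noteq> Y"
  shows "X \<subset> Y \<longleftrightarrow> (X \<subseteq> {1 + 4 * k | k::nat. True} \<and> iX Y < iX X)"
proof -
  obtain t where t: "t \<ge> 2" "X = gen t {1} \<or> X = gen (t+1) {1, 2^t - 1}" using classify[OF assms(1)] by blast
  obtain s where s: "s \<ge> 2" "Y = gen s {1} \<or> Y = gen (s+1) {1, 2^s - 1}" using classify[OF assms(2)] by blast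
  have iXt: "iX X * 4 = 2^(t+1)" using t A_facts B_facts by auto
  have iYs: "iX Y * 4 = 2^(s+1)" using s A_facts B_facts by auto
  have icmp: "iX Y < iX X \<longleftrightarrow> s < t"
  proof -
    have "iX Y < iX X \<longleftrightarrow> iX Y * 4 < iX X * 4" by simp
    also have "\<dots> \<longleftrightarrow> (2::nat)^(s+1) < 2^(t+1)" by (simp only: iXt iYs)
    also have "\<dots> \<longleftrightarrow> s < t" by simp
    finally show ?thesis .
  qed
  show ?thesis
  proof
    assume sub: "X \<subset> Y"
    show "X \<subseteq> {1 + 4 * k | k::nat. True} \<and> iX Y < iX X"
    proof (cases "X = gen t {1}")
      case XA: True
      have "s < t"
      proof (rule ccontr)
        assume "\<not> s < t"
        then have ts: "t \<le> s" by simp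
        show False using s(2)
        proof
          assume "Y = gen s {1}"
          then have "Y \<subseteq> X" using S3A[OF t(1) ts] XA by simp
          then show False using sub by blast
        next
          assume "Y = gen (s+1) {1, 2^s - 1}"
          then show False using S5[OF t(1) ts] XA sub by blast
        qed
      qed
      then show ?thesis using S1[OF t(1)] XA icmp by simp
    next
      case False
      then have XB: "X = gen (t+1) {1, 2^t - 1}" using t by simp
      have False using s(2)
      proof
        assume "Y = gen s {1}"
        then show False using S2[OF t(1)] S1[OF s(1)] XB sub by blast
      next
        assume YB: "Y = gen (s+1) {1, 2^s - 1}"
        then have "s \<noteq> t" using assms(3) XB by blast
        then show False using S6[OF t(1) s(1)] S2(1)[OF t(1)] XB YB sub by blast
      qed
      then show ?thesis ..
    qed
  next
    assume rhs: "X \<subseteq> {1 + 4 * k | k::nat. True} \<and> iX Y < iX X"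
    have XA: "X = gen t {1}" using t S2[OF t(1)] rhs by blast
    have "s < t" using rhs icmp by simp
    have "X \<subseteq> Y" using s(2)
    proof
      assume "Y = gen s {1}"
      then show "X \<subseteq> Y" using S3A[OF s(1), of t] XA \<open>s < t\<close> by simp
    next
      assume "Y = gen (s+1) {1, 2^s - 1}"
      then show "X \<subseteq> Y" using S3B[OF s(1), of t] XA \<open>s < t\<close> by simp
    qed
    then show "X \<subset> Y" using assms(3) by blast
  qed
qed

end
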